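(* Let $(\mathcal X,\mathcal A,P)$ be a probability space and $f\colon\mathcal X\to\mathbb R$ measurable with $m:=\mathbb E_P[f]$ and $\sigma^2:=\mathrm{Var}_P(f)\in[0,\infty)$, such that $M(\lambda):=\mathbb E_P[e^{\lambda(f-m)}]$ is finite for all $\lambda$ in a neighborhood of $0$. For $C>0$ let $\mathcal U_C(P):=\{Q:Q\ll P,\ \mathrm{KL}(Q\Vert P)\le C\}$ and $S_f(C):=\sup_{Q\in\mathcal U_C(P)}\int f\,\mathrm dQ$, where $\mathrm{KL}(Q\Vert P)=\int\log(\mathrm dQ/\mathrm dP)\,\mathrm dQ$. Then as $C\downarrow0$, \[S_f(C)=m+\sqrt{2\mathrm{Var}_P(f)}\sqrt C+o(\sqrt C).\] Moreover, if $\mathrm{Var}_P(f)>0$, then $\lim_{C\downarrow0}\frac{S_f(C)-m}{\sqrt{2\mathrm{Var}_P(f)}\sqrt C}=1$; in particular for any $k<\sqrt{2\mathrm{Var}_P(f)}$ there is a sequence $C_j\downarrow0$ with $S_f(C_j)>m+k\sqrt{C_j}$ for all large $j$. *)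

theory Defs
  imports "HOL-Probability.Probability" "HOL-Library.Landau_Symbols"
begin

text \<open>Finite KL requires integrability of log(dQ/dP) w.r.t. Q;
  otherwise KL(Q||P) = +infinity and Q is excluded.\<close>

definition KL_ball :: "'a measure \<Rightarrow> real \<Rightarrow> 'a measure set" where
  "KL_ball P C = {Q. sets Q = sets P \<and> prob_space Q \<and> absolutely_continuous P Q \<and>
      integrable Q (entropy_density (exp 1) P Q) \<and> KL_divergence (exp 1) P Q \<le> C}"

definition S_sup :: "'a measure \<Rightarrow> ('a \<Rightarrow> real) \<Rightarrow> real \<Rightarrow> real" where
  "S_sup P f C = (SUP Q\<in>KL_ball P C. integral\<^sup>L Q f)"

end

theory Submission
  imports Defs
begin


lemma young_ineq:
  fixes p a :: real assumes "0 \<le> p"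
  shows "a * p \<le> p * ln p - p + exp a"
proof (cases "p = 0")
  case True then show ?thesis by simp
next
  case False
  then have pp: "p > 0" using assms by simp
  have "1 + (a - ln p) \<le> exp (a - ln p)" by (rule exp_ge_add_one_self)
  also have "\<dots> = exp a / p" using pp by (simp add: exp_diff)
  finally have "p * (1 + (a - ln p)) \<le> p * (exp a / p)" using pp by (intro mult_left_mono) auto
  then show ?thesis using pp by (simp add: algebra_simps)
qed

lemma exp_cubic_bound:
  fixes x :: real
  shows "exp x \<le> 1 + x + x\<^sup>2 / 2 + \<bar>x\<bar> ^ 3 * exp \<bar>x\<bar> / 6"
proof -
  obtain t where t: "\<bar>t\<bar> \<le> \<bar>x\<bar>" "exp x = (\<Sum>m<3. (x ^ m) / fact m) + (exp t / fact 3) * x ^ 3"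
    using Maclaurin_exp_le[of x 3] by blast
  have s: "(\<Sum>m<3. (x ^ m) / fact m) = 1 + x + x\<^sup>2 / 2"
    by (simp add: eval_nat_numeral fact_numeral power2_eq_square)
  have "exp t * x ^ 3 \<le> exp \<bar>x\<bar> * \<bar>x\<bar> ^ 3"
  proof -
    have "exp t * x ^ 3 \<le> exp t * \<bar>x\<bar> ^ 3"
      by (intro mult_left_mono) (auto simp: power_abs[symmetric])
    also have "\<dots> \<le> exp \<bar>x\<bar> * \<bar>x\<bar> ^ 3"
      using t(1) by (intro mult_right_mono) auto
    finally show ?thesis .
  qed
  then show ?thesis using t(2) s by (simp add: fact_numeral mult.commute)
qed

lemma cube_le_exp:
  fixes y :: real assumes "0 \<le> y"
  shows "y ^ 3 \<le> 6 * exp y"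
proof -
  obtain t where t: "\<bar>t\<bar> \<le> \<bar>y\<bar>" "exp y = (\<Sum>m<4. (y ^ m) / fact m) + (exp t / fact 4) * y ^ 4"
    using Maclaurin_exp_le[of y 4] by blast
  have "(\<Sum>m<4. (y ^ m) / fact m) = 1 + y + y^2/2 + y^3/6"
    by (simp add: eval_nat_numeral fact_numeral)
  moreover have "0 \<le> (exp t / fact 4) * y ^ 4" using assms by simp
  ultimately have "y^3/6 \<le> exp y" using t(2) assms by simp
  then show ?thesis by simp
qed

lemma ln_cubic_upper:
  fixes x :: real assumes "-1 < x"
  shows "ln (1 + x) \<le> x - x\<^sup>2 / 2 + x ^ 3 / 3"
proof -
  define \<phi> where "\<phi> = (\<lambda>y::real. y - y\<^sup>2 / 2 + y ^ 3 / 3 - ln (1 + y))"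
  have d: "DERIV \<phi> y :> y ^ 3 / (1 + y)" if "-1 < y" for y
  proof -
    have "DERIV \<phi> y :> 1 - y + y\<^sup>2 - 1 / (1 + y)"
      unfolding \<phi>_def using that
      by (auto intro!: derivative_eq_intros simp: power2_eq_square field_simps)
    moreover have "1 - y + y\<^sup>2 - 1 / (1 + y) = y ^ 3 / (1 + y)"
      using that by (simp add: field_simps power2_eq_square power3_eq_cube)
    ultimately show ?thesis by simp
  qed
  have "\<phi> 0 \<le> \<phi> x"
  proof (cases "0 \<le> x")
    case True
    show ?thesis
    proof (rule DERIV_nonneg_imp_nondecreasing[OF True])
      fix y assume "0 \<le> y" "y \<le> x"
      then show "\<exists>z. DERIV \<phi> y :> z \<and> 0 \<le> z" using d[of y] by (intro exI[of _ "y^3/(1+y)"]) auto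
    qed
  next
    case False
    show ?thesis
    proof (rule deriv_nonpos_imp_antimono[of x 0 \<phi> "\<lambda>y. y^3/(1+y)"])
      show "x \<le> 0" using False by simp
      fix y assume "y \<in> {x..0}"
      then have y: "x \<le> y" "y \<le> 0" by auto
      then have "-1 < y" using assms by simp
      then show "DERIV \<phi> y :> y^3/(1+y)" using d by blast
      have "y ^ 3 \<le> 0" using y by (simp add: power_le_zero_eq)
      then show "y^3/(1+y) \<le> 0" using \<open>-1 < y\<close> by (auto simp: divide_nonpos_pos)
    qed
  qed
  then show ?thesis unfolding \<phi>_def by simp
qed

lemma xlogx_cubic_upper:
  fixes x :: real assumes "\<bar>x\<bar> \<le> 1/2"
  shows "(1 + x) * ln (1 + x) \<le> x + x\<^sup>2 / 2 + \<bar>x\<bar> ^ 3"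
proof -
  have "(1 + x) * ln (1 + x) \<le> (1 + x) * (x - x\<^sup>2 / 2 + x ^ 3 / 3)"
    using assms ln_cubic_upper[of x] by (intro mult_left_mono) auto
  also have "\<dots> = x + x\<^sup>2 / 2 - x^3/6 + x^4/3"
    by (simp add: power2_eq_square power3_eq_cube eval_nat_numeral) (simp add: field_simps)
  also have "\<dots> \<le> x + x\<^sup>2 / 2 + \<bar>x\<bar> ^ 3"
  proof -
    have "-(x^3) \<le> \<bar>x^3\<bar>" by (rule abs_ge_minus_self)
    then have "-(x^3)/6 \<le> \<bar>x\<bar>^3/6" by (simp add: power_abs)
    moreover have "x^4/3 \<le> \<bar>x\<bar>^3/6"
    proof -
      have "x^4 = \<bar>x\<bar>^4" by (simp add: power_even_abs_numeral)
      also have "\<dots> = \<bar>x\<bar>^3 * \<bar>x\<bar>" by (simp add: eval_nat_numeral)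
      also have "\<dots> \<le> \<bar>x\<bar>^3 * (1/2)" using assms by (intro mult_left_mono) auto
      finally show ?thesis by simp
    qed
    moreover have "0 \<le> \<bar>x\<bar>^3" by simp
    ultimately show ?thesis by linarith
  qed
  finally show ?thesis .
qed



lemma log_exp1: "log (exp 1) x = ln x" by (simp add: log_def)

lemma KL_ball_density:
  assumes P: "prob_space P" and Q: "Q \<in> KL_ball P C"
  obtains D where "D \<in> borel_measurable P" "\<And>x. 0 \<le> D x" "Q = density P D"
    "integrable P D" "integral\<^sup>L P D = 1"
    "integrable P (\<lambda>x. D x * ln (D x))"
    "(\<integral>x. D x * ln (D x) \<partial>P) \<le> C"
proof -
  interpret prob_space P by fact
  have sQ: "sets Q = sets P" and pQ: "prob_space Q" and ac: "absolutely_continuous P Q"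
    and int: "integrable Q (entropy_density (exp 1) P Q)"
    and kl: "KL_divergence (exp 1) P Q \<le> C"
    using Q unfolding KL_ball_def by auto
  interpret N: prob_space Q by fact
  have "finite_measure Q" by unfold_locales
  from real_RN_deriv[OF this ac sQ] obtain D
    where D: "D \<in> borel_measurable P"
      "AE x in P. RN_deriv P Q x = ennreal (D x)"
      "AE x in Q. 0 < D x"
      "\<And>x. 0 \<le> D x"
    by this auto
  have "Q = density P (RN_deriv P Q)"
    using ac sQ by (rule density_RN_deriv[symmetric])
  also have "\<dots> = density P D"
    using D by (auto intro!: density_cong)
  finally have N: "Q = density P D" .
  have aeQ: "AE x in Q. RN_deriv P Q x = ennreal (D x)"
    using absolutely_continuous_AE[OF sQ ac D(2)] .
  have ent: "AE x in Q. entropy_density (exp 1) P Q x = ln (D x)"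
    using aeQ by eventually_elim (auto simp: entropy_density_def log_exp1 D(4))
  have m1: "entropy_density (exp 1) P Q \<in> borel_measurable Q"
    by (subst measurable_cong_sets[OF sQ refl]) (rule measurable_entropy_density)
  have m2: "(\<lambda>x. ln (D x)) \<in> borel_measurable Q"
    by (subst measurable_cong_sets[OF sQ refl]) (use D(1) in measurable)
  have intQ: "integrable Q (\<lambda>x. ln (D x))"
    using integrable_cong_AE[OF m1 m2 ent] int by simp
  have intP: "integrable P (\<lambda>x. D x * ln (D x))"
    using intQ integrable_real_density[of D P "\<lambda>x. ln (D x)"] D(1,4) N by simp
  have "KL_divergence (exp 1) P Q = integral\<^sup>L Q (\<lambda>x. ln (D x))"
    unfolding KL_divergence_def by (rule integral_cong_AE[OF m1 m2 ent])
  also have "\<dots> = (\<integral>x. D x * ln (D x) \<partial>P)"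
    using D by (subst N, subst integral_real_density) auto
  finally have klv: "KL_divergence (exp 1) P Q = (\<integral>x. D x * ln (D x) \<partial>P)" .
  have nn1: "(\<integral>\<^sup>+x. D x \<partial>P) = 1"
  proof -
    have "emeasure Q (space Q) = 1" by (rule N.emeasure_space_1)
    then have "emeasure (density P D) (space P) = 1" using N by simp
    moreover have "(\<integral>\<^sup>+x. D x \<partial>P) = (\<integral>\<^sup>+x. D x * indicator (space P) x \<partial>P)"
      by (intro nn_integral_cong) (simp add: indicator_def)
    ultimately show ?thesis using emeasure_density[of D P "space P"] D(1) by simp
  qed
  have iD: "integrable P D"
    by (rule integrableI_nn_integral_finite[where x=1, OF D(1)]) (use nn1 D(4) in auto)
  have "ennreal (integral\<^sup>L P D) = 1"
    using nn_integral_eq_integral[OF iD] nn1 D(4) by auto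
  then have "integral\<^sup>L P D = 1"
    by (metis ennreal_1 ennreal_inj integral_nonneg_AE AE_I2 D(4) zero_le_one)
  then show ?thesis using that D(1,4) N iD intP klv kl by auto
qed



lemma gibbs_density:
  fixes D g :: "'a \<Rightarrow> real" and l :: real
  assumes P: "prob_space P" and D: "D \<in> borel_measurable P" "\<And>x. 0 \<le> D x" "integrable P D"
    "integral\<^sup>L P D = 1" "integrable P (\<lambda>x. D x * ln (D x))"
  and g: "g \<in> borel_measurable P" "integrable P (\<lambda>x. exp (l * g x))"
    "integrable P (\<lambda>x. exp (-(l * g x)))" and l: "0 < l"
  shows "integrable P (\<lambda>x. D x * g x)"
    "l * (\<integral>x. D x * g x \<partial>P) \<le> (\<integral>x. D x * ln (D x) \<partial>P) + (\<integral>x. exp (l * g x) \<partial>P) - 1"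
proof -
  have y1: "(l * g x) * D x \<le> D x * ln (D x) - D x + exp (l * g x)" for x
    using young_ineq[of "D x" "l * g x"] D(2)[of x] by simp
  have y2: "(-(l * g x)) * D x \<le> D x * ln (D x) - D x + exp (-(l * g x))" for x
    using young_ineq[of "D x" "-(l * g x)"] D(2)[of x] by simp
  define F where "F = (\<lambda>x. D x * ln (D x) - D x + exp (l * g x) + exp (-(l * g x)))"
  have iF: "integrable P F" unfolding F_def using D g by auto
  have bnd: "norm (l * g x * D x) \<le> norm (F x)" for x
  proof -
    have a: "0 < exp (l * g x)" "0 < exp (-(l * g x))" by auto
    have "l * g x * D x \<le> F x" using y1[of x] a unfolding F_def by linarith
    moreover have "-(l * g x * D x) \<le> F x" using y2[of x] a unfolding F_def mult_minus_left by linarith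
    ultimately have "\<bar>l * g x * D x\<bar> \<le> F x" by (simp add: abs_le_iff)
    then show ?thesis by simp
  qed
  have i1: "integrable P (\<lambda>x. l * g x * D x)"
    by (rule Bochner_Integration.integrable_bound[OF iF]) (use D g bnd in auto)
  have "integrable P (\<lambda>x. (1/l) * (l * g x * D x))" using i1 by (rule integrable_mult_right)
  moreover have "(\<lambda>x. (1/l) * (l * g x * D x)) = (\<lambda>x. D x * g x)" using l by (auto simp: fun_eq_iff)
  ultimately show iDg: "integrable P (\<lambda>x. D x * g x)" by simp
  have "l * (\<integral>x. D x * g x \<partial>P) = (\<integral>x. l * g x * D x \<partial>P)"
    by (simp add: mult.commute mult.left_commute)
  also have "\<dots> \<le> (\<integral>x. D x * ln (D x) - D x + exp (l * g x) \<partial>P)"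
    by (rule integral_mono[OF i1]) (use D g y1 in auto)
  also have "\<dots> = (\<integral>x. D x * ln (D x) \<partial>P) + (\<integral>x. exp (l * g x) \<partial>P) - 1"
    using D g by (simp add: integral_add integral_diff)
  finally show "l * (\<integral>x. D x * g x \<partial>P) \<le> (\<integral>x. D x * ln (D x) \<partial>P) + (\<integral>x. exp (l * g x) \<partial>P) - 1" .
qed



lemma pert_ball:
  fixes h :: "'a \<Rightarrow> real" and t B C :: real
  assumes P: "prob_space P" and h: "h \<in> borel_measurable P" "\<And>x. \<bar>h x\<bar> \<le> B" "integral\<^sup>L P h = 0"
    and t: "0 \<le> t" "t * B \<le> 1/2"
    and C: "t\<^sup>2 / 2 * (\<integral>x. (h x)\<^sup>2 \<partial>P) + t ^ 3 * B * (\<integral>x. (h x)\<^sup>2 \<partial>P) \<le> C"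
  shows "density P (\<lambda>x. 1 + t * h x) \<in> KL_ball P C"
    and "\<And>f. integrable P f \<Longrightarrow>
           integral\<^sup>L (density P (\<lambda>x. 1 + t * h x)) f = integral\<^sup>L P f + t * (\<integral>x. h x * f x \<partial>P)"
proof -
  interpret prob_space P by fact
  define E where "E = (\<lambda>x. 1 + t * h x)"
  have B0: "0 \<le> B" using h(2)[of undefined] by linarith
  have th: "\<bar>t * h x\<bar> \<le> 1/2" for x
  proof -
    have "\<bar>t * h x\<bar> = t * \<bar>h x\<bar>" using t by (simp add: abs_mult)
    also have "\<dots> \<le> t * B" using t h(2)[of x] by (intro mult_left_mono) auto
    finally show ?thesis using t by linarith
  qed
  have E_pos: "1/2 \<le> E x" for x using th[of x] unfolding E_def by (simp add: abs_le_iff)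
  have Em[measurable]: "E \<in> borel_measurable P" unfolding E_def using h by measurable
  have ih: "integrable P h"
    by (rule integrable_const_bound[where B=B]) (use h in auto)
  have hbb: "(h x)\<^sup>2 \<le> B\<^sup>2" for x
  proof -
    have "\<bar>h x\<bar> \<le> \<bar>B\<bar>" using h(2)[of x] B0 by simp
    then show ?thesis by (simp add: abs_le_square_iff)
  qed
  have ih2: "integrable P (\<lambda>x. (h x)\<^sup>2)"
    by (rule integrable_const_bound[where B="B\<^sup>2"]) (use h hbb in auto)
  have iE: "integrable P E" unfolding E_def using ih by auto
  have intE: "integral\<^sup>L P E = 1" unfolding E_def using ih h(3) by (simp add: integral_add prob_space)
  have up: "E x * ln (E x) \<le> t * h x + t\<^sup>2 / 2 * (h x)\<^sup>2 + t ^ 3 * B * (h x)\<^sup>2" for x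
  proof -
    have "E x * ln (E x) \<le> t * h x + (t * h x)\<^sup>2 / 2 + \<bar>t * h x\<bar> ^ 3"
      using xlogx_cubic_upper[OF th[of x]] unfolding E_def .
    moreover have "\<bar>t * h x\<bar> ^ 3 \<le> t ^ 3 * B * (h x)\<^sup>2"
    proof -
      have "\<bar>t * h x\<bar> ^ 3 = t ^ 3 * (\<bar>h x\<bar> * (h x)\<^sup>2)"
        using t by (simp add: abs_mult power_mult_distrib eval_nat_numeral)
      also have "\<dots> \<le> t ^ 3 * (B * (h x)\<^sup>2)"
        using t h(2)[of x] by (intro mult_left_mono mult_right_mono) auto
      finally show ?thesis by simp
    qed
    ultimately show ?thesis by (simp add: power_mult_distrib)
  qed
  have lo: "t * h x \<le> E x * ln (E x)" for x
    using young_ineq[of "E x" 0] E_pos[of x] unfolding E_def by simp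
  have iElnE: "integrable P (\<lambda>x. E x * ln (E x))"
  proof (rule integrable_const_bound[where B="t * B + t\<^sup>2 / 2 * B\<^sup>2 + t ^ 3 * B * B\<^sup>2"])
    show "(\<lambda>x. E x * ln (E x)) \<in> borel_measurable P" by measurable
    show "AE x in P. norm (E x * ln (E x)) \<le> t * B + t\<^sup>2 / 2 * B\<^sup>2 + t ^ 3 * B * B\<^sup>2"
    proof (rule AE_I2)
      fix x
      have hb: "(h x)\<^sup>2 \<le> B\<^sup>2" by (rule hbb)
      have a1: "t * h x \<le> t * B" using h(2)[of x] t by (auto intro: mult_left_mono simp: abs_le_iff)
      have "- h x \<le> B" using h(2)[of x] by (simp add: abs_le_iff)
      then have "t * (- h x) \<le> t * B" using t(1) by (rule mult_left_mono)
      then have a1': "- (t * B) \<le> t * h x" by simp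
      have a2: "t\<^sup>2 / 2 * (h x)\<^sup>2 \<le> t\<^sup>2 / 2 * B\<^sup>2" using hb by (intro mult_left_mono) auto
      have a3: "t ^ 3 * B * (h x)\<^sup>2 \<le> t ^ 3 * B * B\<^sup>2" using hb t B0 by (intro mult_left_mono) auto
      have a4: "0 \<le> t\<^sup>2 / 2 * (h x)\<^sup>2" "0 \<le> t ^ 3 * B * (h x)\<^sup>2" using t B0 by auto
      show "norm (E x * ln (E x)) \<le> t * B + t\<^sup>2 / 2 * B\<^sup>2 + t ^ 3 * B * B\<^sup>2"
        using up[of x] lo[of x] a1 a1' a2 a3 a4 by (simp add: abs_le_iff)
    qed
  qed
  have sD: "sets (density P E) = sets P" by simp
  have E_nn0: "0 \<le> E x" for x using E_pos[of x] by linarith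
  have E_nn: "AE x in P. 0 \<le> E x" using E_nn0 by simp
  have nnE: "(\<integral>\<^sup>+x. E x \<partial>P) = 1"
    using nn_integral_eq_integral[OF iE E_nn] intE by simp
  have pD: "prob_space (density P E)"
  proof (rule prob_spaceI)
    have "(\<integral>\<^sup>+x. E x \<partial>P) = (\<integral>\<^sup>+x. E x * indicator (space P) x \<partial>P)"
      by (intro nn_integral_cong) (simp add: indicator_def)
    then show "emeasure (density P E) (space (density P E)) = 1"
      using emeasure_density[of E P "space P"] nnE by simp
  qed
  have acD: "absolutely_continuous P (density P E)"
    by (rule absolutely_continuousI_density) measurable
  have KLv: "KL_divergence (exp 1) P (density P E) = (\<integral>x. E x * ln (E x) \<partial>P)"
    using KL_density[of "exp 1" E] E_nn by (simp add: log_exp1)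
  have "density P (RN_deriv P (density P E)) = density P E"
    by (intro density_RN_deriv_density) measurable
  then have eq: "AE x in P. RN_deriv P (density P E) x = E x"
    using E_nn by (intro density_unique) auto
  have ae2: "AE x in P. E x * entropy_density (exp 1) P (density P E) x = E x * ln (E x)"
    using eq E_nn by eventually_elim (auto simp: entropy_density_def log_exp1)
  have m3: "(\<lambda>x. E x * entropy_density (exp 1) P (density P E) x) \<in> borel_measurable P"
    by measurable
  have m4: "(\<lambda>x. E x * ln (E x)) \<in> borel_measurable P" by measurable
  have "integrable P (\<lambda>x. E x * entropy_density (exp 1) P (density P E) x)"
    using integrable_cong_AE[OF m3 m4 ae2] iElnE by simp
  then have intent: "integrable (density P E) (entropy_density (exp 1) P (density P E))"
    using integrable_real_density[of E P "entropy_density (exp 1) P (density P E)"] E_nn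
    by simp
  have "(\<integral>x. E x * ln (E x) \<partial>P) \<le>
        (\<integral>x. t * h x + t\<^sup>2 / 2 * (h x)\<^sup>2 + t ^ 3 * B * (h x)\<^sup>2 \<partial>P)"
    by (rule integral_mono[OF iElnE]) (use ih ih2 up in auto)
  also have "\<dots> = t\<^sup>2 / 2 * (\<integral>x. (h x)\<^sup>2 \<partial>P) + t ^ 3 * B * (\<integral>x. (h x)\<^sup>2 \<partial>P)"
    using ih ih2 h(3) by (simp add: integral_add)
  finally have "KL_divergence (exp 1) P (density P E) \<le> C" using C KLv by simp
  then have "density P E \<in> KL_ball P C"
    using sD pD acD intent unfolding KL_ball_def by auto
  then show "density P (\<lambda>x. 1 + t * h x) \<in> KL_ball P C" unfolding E_def .
  fix f :: "'a \<Rightarrow> real" assume f: "integrable P f"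
  have ihf: "integrable P (\<lambda>x. h x * f x)"
  proof (rule Bochner_Integration.integrable_bound[of P "\<lambda>x. B * f x"])
    show "integrable P (\<lambda>x. B * f x)" using f by auto
    show "(\<lambda>x. h x * f x) \<in> borel_measurable P" using f h by measurable
    show "AE x in P. norm (h x * f x) \<le> norm (B * f x)"
      using h(2) B0 by (auto simp: abs_mult intro!: mult_right_mono)
  qed
  have "integral\<^sup>L (density P E) f = (\<integral>x. E x * f x \<partial>P)"
    using E_nn f by (subst integral_real_density) auto
  also have "\<dots> = (\<integral>x. f x + t * (h x * f x) \<partial>P)"
    unfolding E_def by (simp add: algebra_simps)
  also have "\<dots> = integral\<^sup>L P f + t * (\<integral>x. h x * f x \<partial>P)"
    using f ihf by simp
  finally show "integral\<^sup>L (density P (\<lambda>x. 1 + t * h x)) f = integral\<^sup>L P f + t * (\<integral>x. h x * f x \<partial>P)"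
    unfolding E_def .
qed



lemma mgf_bound:
  fixes f :: "'a \<Rightarrow> real" and m \<delta> :: real
  assumes P: "prob_space P" and f: "f \<in> borel_measurable P" "integrable P f"
    "integrable P (\<lambda>x. (f x)\<^sup>2)"
    and d: "0 < \<delta>" "\<And>l. \<bar>l\<bar> < \<delta> \<Longrightarrow> integrable P (\<lambda>x. exp (l * (f x - m)))"
    and m: "m = integral\<^sup>L P f"
  shows "\<exists>l1>0. \<exists>K\<ge>0. \<forall>l. 0 < l \<and> l \<le> l1 \<longrightarrow>
     (\<integral>x. exp (l * (f x - m)) \<partial>P) - 1 \<le> l\<^sup>2 / 2 * (\<integral>x. (f x - m)\<^sup>2 \<partial>P) + l ^ 3 * K"
proof -
  interpret prob_space P by fact
  define g where "g = (\<lambda>x. f x - m)"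
  have gm[measurable]: "g \<in> borel_measurable P" unfolding g_def using f by measurable
  have ig: "integrable P g" unfolding g_def using f by auto
  have Eg: "integral\<^sup>L P g = 0" unfolding g_def using f m by (simp add: prob_space)
  have "(\<lambda>x. (g x)\<^sup>2) = (\<lambda>x. (f x)\<^sup>2 - 2 * m * f x + m\<^sup>2)"
    unfolding g_def by (auto simp: fun_eq_iff power2_eq_square algebra_simps)
  then have ig2: "integrable P (\<lambda>x. (g x)\<^sup>2)" using f by simp
  define l1 where "l1 = \<delta> / 3"
  have l1: "0 < l1" "2 * l1 < \<delta>" unfolding l1_def using d by auto
  define H where "H = (\<lambda>x. \<bar>g x\<bar> ^ 3 * exp (l1 * \<bar>g x\<bar>))"
  have Hm[measurable]: "H \<in> borel_measurable P" unfolding H_def by measurable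
  have Hnn: "0 \<le> H x" for x unfolding H_def by simp
  have ie1: "integrable P (\<lambda>x. exp ((2 * l1) * g x))" using d(2)[of "2 * l1"] l1 unfolding g_def by simp
  have ie2: "integrable P (\<lambda>x. exp ((- (2 * l1)) * g x))" using d(2)[of "-(2 * l1)"] l1 unfolding g_def by simp
  have Hb: "H x \<le> 6 / l1 ^ 3 * (exp ((2 * l1) * g x) + exp ((- (2 * l1)) * g x))" for x
  proof -
    have c: "(l1 * \<bar>g x\<bar>) ^ 3 \<le> 6 * exp (l1 * \<bar>g x\<bar>)" using cube_le_exp[of "l1 * \<bar>g x\<bar>"] l1 by simp
    have c2: "\<bar>g x\<bar> ^ 3 \<le> 6 / l1 ^ 3 * exp (l1 * \<bar>g x\<bar>)"
      using c l1 by (simp add: power_mult_distrib field_simps)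
    have "H x \<le> 6 / l1 ^ 3 * exp (l1 * \<bar>g x\<bar>) * exp (l1 * \<bar>g x\<bar>)"
      unfolding H_def using c2 by (intro mult_right_mono) auto
    also have "\<dots> = 6 / l1 ^ 3 * exp ((2 * l1) * \<bar>g x\<bar>)"
    proof -
      have "exp (l1 * \<bar>g x\<bar>) * exp (l1 * \<bar>g x\<bar>) = exp ((2 * l1) * \<bar>g x\<bar>)"
        by (simp add: exp_add[symmetric])
      then show ?thesis by (simp add: mult.assoc)
    qed
    also have "\<dots> \<le> 6 / l1 ^ 3 * (exp ((2 * l1) * g x) + exp ((- (2 * l1)) * g x))"
    proof -
      have "exp ((2 * l1) * \<bar>g x\<bar>) \<le> exp ((2 * l1) * g x) + exp ((- (2 * l1)) * g x)"
        by (cases "0 \<le> g x") (auto simp: abs_if add_pos_nonneg add_nonneg_pos)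
      then show ?thesis using l1 by (intro mult_left_mono) auto
    qed
    finally show ?thesis .
  qed
  have iH: "integrable P H"
  proof (rule Bochner_Integration.integrable_bound[of P "\<lambda>x. 6 / l1 ^ 3 * (exp ((2 * l1) * g x) + exp ((- (2 * l1)) * g x))"])
    show "integrable P (\<lambda>x. 6 / l1 ^ 3 * (exp ((2 * l1) * g x) + exp ((- (2 * l1)) * g x)))"
      using ie1 ie2 by auto
    show "AE x in P. norm (H x) \<le> norm (6 / l1 ^ 3 * (exp ((2 * l1) * g x) + exp ((- (2 * l1)) * g x)))"
      using Hb Hnn order_trans[OF Hb abs_ge_self] by (auto simp del: mult_minus_left)
  qed simp
  define K where "K = integral\<^sup>L P H / 6"
  have K0: "0 \<le> K" unfolding K_def using Hnn by (simp add: integral_nonneg_AE)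
  have main: "(\<integral>x. exp (l * (f x - m)) \<partial>P) - 1 \<le> l\<^sup>2 / 2 * (\<integral>x. (f x - m)\<^sup>2 \<partial>P) + l ^ 3 * K"
    if l: "0 < l" "l \<le> l1" for l
  proof -
    have pw: "exp (l * g x) \<le> 1 + l * g x + l\<^sup>2 / 2 * (g x)\<^sup>2 + l ^ 3 / 6 * H x" for x
    proof -
      have "exp (l * g x) \<le> 1 + l * g x + (l * g x)\<^sup>2 / 2 + \<bar>l * g x\<bar> ^ 3 * exp \<bar>l * g x\<bar> / 6"
        by (rule exp_cubic_bound)
      moreover have "\<bar>l * g x\<bar> ^ 3 * exp \<bar>l * g x\<bar> \<le> l ^ 3 * H x"
      proof -
        have "\<bar>l * g x\<bar> ^ 3 * exp \<bar>l * g x\<bar> = l ^ 3 * (\<bar>g x\<bar> ^ 3 * exp (l * \<bar>g x\<bar>))"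
          using l by (simp add: abs_mult power_mult_distrib)
        also have "\<dots> \<le> l ^ 3 * H x" unfolding H_def using l
          by (intro mult_left_mono mult_left_mono) (auto intro!: mult_right_mono)
        finally show ?thesis .
      qed
      ultimately show ?thesis by (simp add: power_mult_distrib)
    qed
    have ie: "integrable P (\<lambda>x. exp (l * g x))" using d(2)[of l] l l1 unfolding g_def by simp
    have "(\<integral>x. exp (l * g x) \<partial>P) \<le> (\<integral>x. 1 + l * g x + l\<^sup>2 / 2 * (g x)\<^sup>2 + l ^ 3 / 6 * H x \<partial>P)"
      by (rule integral_mono[OF ie]) (use ig ig2 iH pw in auto)
    also have "\<dots> = 1 + l\<^sup>2 / 2 * (\<integral>x. (g x)\<^sup>2 \<partial>P) + l ^ 3 * K"
      using ig ig2 iH Eg unfolding K_def by (simp add: integral_add prob_space)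
    finally show ?thesis unfolding g_def by simp
  qed
  show ?thesis using l1(1) K0 main by blast
qed



lemma ball_upper:
  fixes f :: "'a \<Rightarrow> real" and m \<delta> :: real
  assumes P: "prob_space P" and f: "f \<in> borel_measurable P" "integrable P f"
    "integrable P (\<lambda>x. (f x)\<^sup>2)"
    and d: "0 < \<delta>" "\<And>l. \<bar>l\<bar> < \<delta> \<Longrightarrow> integrable P (\<lambda>x. exp (l * (f x - m)))"
    and m: "m = integral\<^sup>L P f"
  shows "\<exists>l1>0. \<exists>K\<ge>0. \<forall>l C Q. 0 < l \<longrightarrow> l \<le> l1 \<longrightarrow> Q \<in> KL_ball P C \<longrightarrow>
     integral\<^sup>L Q f \<le> m + C / l + l / 2 * (\<integral>x. (f x - m)\<^sup>2 \<partial>P) + l\<^sup>2 * K"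
proof -
  interpret prob_space P by fact
  obtain l0 K where l0: "0 < l0" "0 \<le> K" and mb: "\<And>l. 0 < l \<Longrightarrow> l \<le> l0 \<Longrightarrow>
     (\<integral>x. exp (l * (f x - m)) \<partial>P) - 1 \<le> l\<^sup>2 / 2 * (\<integral>x. (f x - m)\<^sup>2 \<partial>P) + l ^ 3 * K"
    using mgf_bound[OF P f d m] by blast
  define l1 where "l1 = min l0 (\<delta> / 2)"
  have l1: "0 < l1" unfolding l1_def using l0 d by auto
  define g where "g = (\<lambda>x. f x - m)"
  have gm[measurable]: "g \<in> borel_measurable P" unfolding g_def using f by measurable
  have "0 < l \<longrightarrow> l \<le> l1 \<longrightarrow> Q \<in> KL_ball P C \<longrightarrow>
     integral\<^sup>L Q f \<le> m + C / l + l / 2 * (\<integral>x. (f x - m)\<^sup>2 \<partial>P) + l\<^sup>2 * K" for l C Q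
  proof (intro impI)
    assume l: "0 < l" "l \<le> l1" and Q: "Q \<in> KL_ball P C"
    obtain D where D: "D \<in> borel_measurable P" "\<And>x. 0 \<le> D x" "Q = density P D"
      "integrable P D" "integral\<^sup>L P D = 1" "integrable P (\<lambda>x. D x * ln (D x))"
      "(\<integral>x. D x * ln (D x) \<partial>P) \<le> C"
      using KL_ball_density[OF P Q] by blast
    have e1: "integrable P (\<lambda>x. exp (l * g x))" using d(2)[of l] l unfolding l1_def g_def by auto
    have e2: "integrable P (\<lambda>x. exp (-(l * g x)))" using d(2)[of "-l"] l unfolding l1_def g_def by auto
    note G = gibbs_density[OF P D(1,2,4,5,6) gm e1 e2 l(1)]
    have "integral\<^sup>L Q f = (\<integral>x. D x * f x \<partial>P)"
      using D f by (simp add: integral_real_density)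
    also have "\<dots> = (\<integral>x. D x * g x + m * D x \<partial>P)"
      unfolding g_def by (simp add: algebra_simps)
    also have "\<dots> = (\<integral>x. D x * g x \<partial>P) + m"
      using G(1) D(4,5) by simp
    finally have Qf: "integral\<^sup>L Q f = (\<integral>x. D x * g x \<partial>P) + m" .
    have "l * (\<integral>x. D x * g x \<partial>P) \<le> C + l\<^sup>2 / 2 * (\<integral>x. (f x - m)\<^sup>2 \<partial>P) + l ^ 3 * K"
      using G(2) D(7) mb[of l] l unfolding l1_def g_def by auto
    then have "(\<integral>x. D x * g x \<partial>P) \<le> (C + l\<^sup>2 / 2 * (\<integral>x. (f x - m)\<^sup>2 \<partial>P) + l ^ 3 * K) / l"
      using l by (simp add: field_simps mult.commute)
    also have "\<dots> = C / l + l / 2 * (\<integral>x. (f x - m)\<^sup>2 \<partial>P) + l\<^sup>2 * K"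
      using l by (simp add: field_simps power2_eq_square power3_eq_cube)
    finally show "integral\<^sup>L Q f \<le> m + C / l + l / 2 * (\<integral>x. (f x - m)\<^sup>2 \<partial>P) + l\<^sup>2 * K"
      using Qf by simp
  qed
  then show ?thesis using l1 l0 by blast
qed



lemma ball_lower:
  fixes f :: "'a \<Rightarrow> real" and m v \<epsilon> :: real
  assumes P: "prob_space P" and f: "f \<in> borel_measurable P" "integrable P f"
    "integrable P (\<lambda>x. (f x)\<^sup>2)"
    and m: "m = integral\<^sup>L P f" and v: "v = (\<integral>x. (f x - m)\<^sup>2 \<partial>P)" "0 < v" and e: "0 < \<epsilon>"
  shows "\<exists>s0>0. \<forall>s. 0 < s \<longrightarrow> s < s0 \<longrightarrow>
           (\<exists>Q\<in>KL_ball P (s\<^sup>2). m + s * (sqrt (2 * v) - \<epsilon>) \<le> integral\<^sup>L Q f)"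
proof -
  interpret prob_space P by fact
  define g where "g = (\<lambda>x. f x - m)"
  have gm[measurable]: "g \<in> borel_measurable P" unfolding g_def using f by measurable
  have ig: "integrable P g" unfolding g_def using f by auto
  have Eg: "integral\<^sup>L P g = 0" unfolding g_def using f m by (simp add: prob_space)
  have "(\<lambda>x. (g x)\<^sup>2) = (\<lambda>x. (f x)\<^sup>2 - 2 * m * f x + m\<^sup>2)"
    unfolding g_def by (auto simp: fun_eq_iff power2_eq_square algebra_simps)
  then have ig2: "integrable P (\<lambda>x. (g x)\<^sup>2)" using f by simp
  have v': "v = (\<integral>x. (g x)\<^sup>2 \<partial>P)" unfolding v g_def ..
  define gN where "gN = (\<lambda>(N::nat) x. max (- real N) (min (real N) (g x)))"
  have gNm[measurable]: "gN N \<in> borel_measurable P" for N unfolding gN_def by measurable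
  have gNb: "\<bar>gN N x\<bar> \<le> real N" for N x unfolding gN_def by auto
  have gNg: "\<bar>gN N x\<bar> \<le> \<bar>g x\<bar>" for N x unfolding gN_def by auto
  have gNsq: "(gN N x)\<^sup>2 \<le> g x * gN N x" for N x
  proof -
    have c1: "real N * real N \<le> (- g x) * real N" if "g x \<le> - real N"
      using that by (intro mult_right_mono) auto
    have c2: "real N * real N \<le> g x * real N" if "real N \<le> g x"
      using that by (intro mult_right_mono) auto
    show ?thesis unfolding gN_def using c1 c2
      by (auto simp: max_def min_def power2_eq_square)
  qed
  define a where "a = (\<lambda>N. \<integral>x. g x * gN N x \<partial>P)"
  have igN: "integrable P (gN N)" for N
    by (rule integrable_const_bound[where B="real N"]) (use gNb in auto)
  have gNb2: "(gN N x)\<^sup>2 \<le> (real N)\<^sup>2" for N x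
  proof -
    show ?thesis using power_mono[OF gNb[of N x] abs_ge_zero, of 2] by simp
  qed
  have igN2: "integrable P (\<lambda>x. (gN N x)\<^sup>2)" for N
    by (rule integrable_const_bound[where B="real N ^ 2"]) (use gNb2 in auto)
  have dom: "norm (g x * gN N x) \<le> (g x)\<^sup>2" for N x
  proof -
    have "\<bar>g x\<bar> * \<bar>gN N x\<bar> \<le> \<bar>g x\<bar> * \<bar>g x\<bar>" using gNg[of N x] by (intro mult_left_mono) auto
    then show ?thesis by (simp add: abs_mult power2_eq_square)
  qed
  have iggN: "integrable P (\<lambda>x. g x * gN N x)" for N
    by (rule Bochner_Integration.integrable_bound[OF ig2]) (use dom in auto)
  have alim: "a \<longlonglongrightarrow> v"
    unfolding a_def v'
  proof (rule integral_dominated_convergence[where w="\<lambda>x. (g x)\<^sup>2"])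
    show "AE x in P. (\<lambda>N. g x * gN N x) \<longlonglongrightarrow> (g x)\<^sup>2"
    proof (rule AE_I2)
      fix x
      obtain N0 :: nat where "\<bar>g x\<bar> \<le> real N0" using real_arch_simple by blast
      then have "\<forall>N\<ge>N0. g x * gN N x = (g x)\<^sup>2"
        unfolding gN_def by (auto simp: power2_eq_square max_def min_def)
      then show "(\<lambda>N. g x * gN N x) \<longlonglongrightarrow> (g x)\<^sup>2"
        by (intro tendsto_eventually) (auto simp: eventually_sequentially)
    qed
  qed (use ig2 dom in auto)
  define q where "q = sqrt (2 * v)"
  have q0: "0 < q" unfolding q_def using v by simp
  have plim: "(\<lambda>N. sqrt (2 * a N)) \<longlonglongrightarrow> q"
    unfolding q_def by (intro tendsto_intros alim)
  have "q - \<epsilon> / 2 < q" using e by simp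
  note ev1 = order_tendstoD(1)[OF plim this]
  note ev2 = order_tendstoD(1)[OF plim q0]
  have "eventually (\<lambda>N. q - \<epsilon> / 2 < sqrt (2 * a N) \<and> 0 < sqrt (2 * a N)) sequentially"
    by (rule eventually_conj[OF ev1 ev2])
  then obtain N0 where "\<forall>N\<ge>N0. q - \<epsilon> / 2 < sqrt (2 * a N) \<and> 0 < sqrt (2 * a N)"
    unfolding eventually_sequentially by blast
  then obtain N where pN: "q - \<epsilon> / 2 < sqrt (2 * a N)" "0 < sqrt (2 * a N)"
    by blast
  define p where "p = sqrt (2 * a N)"
  have p0: "0 < p" using pN p_def by simp
  have a0: "0 < a N" using p0 unfolding p_def by simp
  have ap: "a N = p\<^sup>2 / 2" unfolding p_def using a0 by simp
  define c where "c = integral\<^sup>L P (gN N)"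
  have cb: "\<bar>c\<bar> \<le> real N"
  proof -
    have lo: "- real N \<le> gN N x" for x using gNb[of N x] by linarith
    have "c \<le> (\<integral>x. real N \<partial>P)" unfolding c_def
      by (rule integral_mono[OF igN]) (use gNb in \<open>auto simp: abs_le_iff\<close>)
    moreover have "(\<integral>x. - real N \<partial>P) \<le> c" unfolding c_def
      by (rule integral_mono[OF _ igN]) (use lo in auto)
    ultimately show ?thesis by (simp add: prob_space abs_le_iff)
  qed
  define h where "h = (\<lambda>x. gN N x - c)"
  have hm[measurable]: "h \<in> borel_measurable P" unfolding h_def by measurable
  have hb: "\<bar>h x\<bar> \<le> 2 * real N" for x
    unfolding h_def using gNb[of N x] cb by (simp add: abs_le_iff)
  have Eh: "integral\<^sup>L P h = 0" unfolding h_def c_def using igN by (simp add: prob_space)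
  have Eh2: "(\<integral>x. (h x)\<^sup>2 \<partial>P) \<le> a N"
  proof -
    have "(\<lambda>x. (h x)\<^sup>2) = (\<lambda>x. (gN N x)\<^sup>2 - 2 * c * gN N x + c\<^sup>2)"
      unfolding h_def by (auto simp: fun_eq_iff power2_eq_square algebra_simps)
    then have "(\<integral>x. (h x)\<^sup>2 \<partial>P) = (\<integral>x. (gN N x)\<^sup>2 \<partial>P) - c\<^sup>2"
      using igN igN2 unfolding c_def by (simp add: prob_space power2_eq_square)
    also have "\<dots> \<le> (\<integral>x. (gN N x)\<^sup>2 \<partial>P)" by simp
    also have "\<dots> \<le> a N" unfolding a_def
      by (rule integral_mono[OF igN2 iggN]) (rule gNsq)
    finally show ?thesis .
  qed
  have Ehf: "(\<integral>x. h x * f x \<partial>P) = a N"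
  proof -
    have "(\<lambda>x. h x * f x) = (\<lambda>x. g x * gN N x + m * gN N x - c * g x - c * m)"
      unfolding h_def g_def by (auto simp: fun_eq_iff algebra_simps)
    then show ?thesis using iggN igN ig Eg unfolding a_def c_def by (simp add: prob_space)
  qed
  define \<theta> where "\<theta> = min (1/2) (\<epsilon> / (2 * p))"
  have th1: "0 < \<theta>" unfolding \<theta>_def using p0 e by simp
  have th2: "\<theta> \<le> 1/2" unfolding \<theta>_def by simp
  have "\<theta> \<le> \<epsilon> / (2 * p)" unfolding \<theta>_def by simp
  then have "p * \<theta> \<le> p * (\<epsilon> / (2 * p))" using p0 by (intro mult_left_mono) auto
  then have th3: "p * \<theta> \<le> \<epsilon> / 2" using p0 by simp
  note th = th1 th2 th3
  define s0 where "s0 = \<theta> * p / (8 * real N + 1)"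
  have s0: "0 < s0" unfolding s0_def using th p0 by simp
  have "\<exists>Q\<in>KL_ball P (s\<^sup>2). m + s * (q - \<epsilon>) \<le> integral\<^sup>L Q f" if s: "0 < s" "s < s0" for s
  proof -
    define t where "t = 2 * s * (1 - \<theta>) / p"
    have t0: "0 \<le> t" unfolding t_def using s th p0 by simp
    have tle: "t \<le> 2 * s / p" unfolding t_def using s th p0 by (simp add: field_simps)
    have sN: "8 * real N * s \<le> \<theta> * p"
    proof -
      have "(8 * real N + 1) * s \<le> (8 * real N + 1) * s0" using s by (intro mult_left_mono) auto
      also have "\<dots> = \<theta> * p" unfolding s0_def by simp
      finally show ?thesis using s by (simp add: algebra_simps)
    qed
    have Nt: "4 * real N * t \<le> \<theta>"
    proof -
      have "4 * real N * t \<le> 4 * real N * (2 * s / p)" using tle by (intro mult_left_mono) auto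
      also have "\<dots> = 8 * real N * s / p" by simp
      also have "\<dots> \<le> \<theta>" using sN p0 by (simp add: divide_le_eq mult.commute)
      finally show ?thesis .
    qed
    have tB: "t * (2 * real N) \<le> 1/2"
    proof -
      have "4 * real N * t \<le> 1/2" using Nt th by linarith
      then show ?thesis by (simp add: algebra_simps)
    qed
    have kl: "t\<^sup>2 / 2 * (\<integral>x. (h x)\<^sup>2 \<partial>P) + t ^ 3 * (2 * real N) * (\<integral>x. (h x)\<^sup>2 \<partial>P) \<le> s\<^sup>2"
    proof -
      have "t\<^sup>2 / 2 * (\<integral>x. (h x)\<^sup>2 \<partial>P) + t ^ 3 * (2 * real N) * (\<integral>x. (h x)\<^sup>2 \<partial>P)
            = t\<^sup>2 / 2 * (1 + 4 * real N * t) * (\<integral>x. (h x)\<^sup>2 \<partial>P)"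
        by (simp add: algebra_simps power2_eq_square power3_eq_cube)
      also have "\<dots> \<le> t\<^sup>2 / 2 * (1 + \<theta>) * a N"
        using Eh2 Nt t0 th by (intro mult_mono mult_left_mono) (auto intro: integral_nonneg_AE)
      also have "\<dots> = s\<^sup>2 * ((1 - \<theta>)\<^sup>2 * (1 + \<theta>))"
        unfolding t_def ap using p0 by (simp add: field_simps power2_eq_square)
      also have "\<dots> \<le> s\<^sup>2 * 1"
      proof -
        have "(1 - \<theta>)\<^sup>2 * (1 + \<theta>) = 1 - \<theta> * (1 + \<theta> - \<theta>\<^sup>2)" by (simp add: algebra_simps power2_eq_square)
        moreover have "0 \<le> \<theta> * (1 + \<theta> - \<theta>\<^sup>2)"
        proof -
          have "\<theta> * \<theta> \<le> 1 * 1" using th by (intro mult_mono) auto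
          then show ?thesis using th by (intro mult_nonneg_nonneg) (auto simp: power2_eq_square)
        qed
        ultimately show ?thesis by (intro mult_left_mono) auto
      qed
      finally show ?thesis by simp
    qed
    note PB = pert_ball[OF P hm hb Eh t0 tB kl]
    have "m + s * (q - \<epsilon>) \<le> m + t * a N"
    proof -
      have "t * a N = s * (p - p * \<theta>)" unfolding t_def ap using p0 by (simp add: field_simps power2_eq_square)
      moreover have "q - \<epsilon> \<le> p - p * \<theta>" using pN(1) th(3) unfolding p_def by linarith
      ultimately show ?thesis using s by (simp add: mult_left_mono)
    qed
    also have "\<dots> = integral\<^sup>L (density P (\<lambda>x. 1 + t * h x)) f"
      using PB(2)[OF f(2)] Ehf m by simp
    finally show ?thesis using PB(1) by blast
  qed
  then show ?thesis using s0 unfolding q_def by blast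
qed



theorem theoremS2:
  fixes P :: "'a measure" and f :: "'a \<Rightarrow> real"
  assumes "prob_space P"
    and "f \<in> borel_measurable P"
    and "integrable P f"
    and "integrable P (\<lambda>x. (f x)\<^sup>2)"
    and "\<exists>\<delta>>0. \<forall>l. \<bar>l\<bar> < \<delta> \<longrightarrow>
            integrable P (\<lambda>x. exp (l * (f x - integral\<^sup>L P f)))"
  defines "m \<equiv> integral\<^sup>L P f"
    and "v \<equiv> integral\<^sup>L P (\<lambda>x. (f x - integral\<^sup>L P f)\<^sup>2)"
  shows "(\<lambda>C. S_sup P f C - m - sqrt (2 * v) * sqrt C) \<in> o[at_right 0](\<lambda>C. sqrt C) \<and>
         (v > 0 \<longrightarrow>
           ((\<lambda>C. (S_sup P f C - m) / (sqrt (2 * v) * sqrt C)) \<longlongrightarrow> 1) (at_right 0)) \<and>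
         (v > 0 \<longrightarrow> (\<forall>k < sqrt (2 * v). \<exists>Cs :: nat \<Rightarrow> real.
           (\<forall>j. Cs j > 0) \<and> decseq Cs \<and> Cs \<longlonglongrightarrow> 0 \<and>
           (\<forall>\<^sub>F j in sequentially. S_sup P f (Cs j) > m + k * sqrt (Cs j))))"
proof -
  note P = assms(1) and f = assms(2,3,4)
  interpret prob_space P by fact
  have m: "m = integral\<^sup>L P f" unfolding m_def ..
  have v: "v = (\<integral>x. (f x - m)\<^sup>2 \<partial>P)" unfolding v_def m_def ..
  have v0: "0 \<le> v" unfolding v by (simp add: integral_nonneg_AE)
  obtain \<delta> where d: "0 < \<delta>" "\<And>l. \<bar>l\<bar> < \<delta> \<Longrightarrow> integrable P (\<lambda>x. exp (l * (f x - m)))"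
    using assms(5) unfolding m by blast
  obtain l1 K where l1: "0 < l1" "0 \<le> K" and ub: "\<And>l C Q. 0 < l \<Longrightarrow> l \<le> l1 \<Longrightarrow> Q \<in> KL_ball P C \<Longrightarrow>
     integral\<^sup>L Q f \<le> m + C / l + l / 2 * v + l\<^sup>2 * K"
    using ball_upper[OF P f d m] unfolding v[symmetric] by blast
  have ne: "\<exists>Q\<in>KL_ball P C. integral\<^sup>L Q f = m" if "0 \<le> C" for C
  proof -
    have h0: "(\<lambda>x. 0::real) \<in> borel_measurable P" by simp
    note PB = pert_ball[OF P h0, of 0 0 C]
    have "density P (\<lambda>x. 1 + 0 * 0) \<in> KL_ball P C" using PB(1) that by simp
    moreover have "integral\<^sup>L (density P (\<lambda>x. 1 + 0 * 0)) f = m" using PB(2)[of f] f(2) that m by simp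
    ultimately show ?thesis by blast
  qed
  have bdd: "bdd_above ((\<lambda>Q. integral\<^sup>L Q f) ` KL_ball P C)" for C
    using ub[OF l1(1) order_refl] by (intro bdd_aboveI2) blast
  have Sle: "S_sup P f C \<le> m + C / l + l / 2 * v + l\<^sup>2 * K" if "0 \<le> C" "0 < l" "l \<le> l1" for C l
    unfolding S_sup_def using ne[OF that(1)] ub[OF that(2,3)] by (intro cSUP_least) auto
  have Sge: "integral\<^sup>L Q f \<le> S_sup P f C" if "Q \<in> KL_ball P C" for Q C
    unfolding S_sup_def using that bdd by (rule cSUP_upper)
  define q where "q = sqrt (2 * v)"
  have q0: "0 \<le> q" unfolding q_def using v0 by simp
  have vq: "v = q\<^sup>2 / 2" unfolding q_def using v0 by simp
  have upper: "\<exists>s1>0. \<forall>s. 0 < s \<longrightarrow> s < s1 \<longrightarrow> S_sup P f (s\<^sup>2) \<le> m + q * s + \<epsilon> * s"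
    if e: "0 < \<epsilon>" for \<epsilon>
  proof -
    obtain r where r: "0 < r" "1 / r + r * v / 2 \<le> q + \<epsilon> / 2"
    proof (cases "v = 0")
      case True
      then show ?thesis using that[of "2 / \<epsilon>"] e q0 by simp
    next
      case False
      then have "0 < q" using q0 vq by (cases "q = 0") auto
      moreover have "1 / (2 / q) + (2 / q) * v / 2 = q" unfolding vq using \<open>0 < q\<close>
        by (simp add: field_simps power2_eq_square)
      ultimately show ?thesis using that[of "2 / q"] e by simp
    qed
    define s1 where "s1 = min (l1 / r) (\<epsilon> / (2 * (r\<^sup>2 * K + 1)))"
    have s1: "0 < s1" unfolding s1_def using l1 r e by (simp add: add_nonneg_pos)
    have "S_sup P f (s\<^sup>2) \<le> m + q * s + \<epsilon> * s" if s: "0 < s" "s < s1" for s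
    proof -
      have "s * r \<le> l1" using s r unfolding s1_def by (simp add: field_simps)
      then have "S_sup P f (s\<^sup>2) \<le> m + s\<^sup>2 / (s * r) + (s * r) / 2 * v + (s * r)\<^sup>2 * K"
        using s r by (intro Sle) auto
      also have "\<dots> = m + s * (1 / r + r * v / 2) + s * (s * r\<^sup>2 * K)"
        using s r by (simp add: field_simps power2_eq_square)
      also have "\<dots> \<le> m + s * (q + \<epsilon> / 2) + s * (\<epsilon> / 2)"
      proof -
        have rk: "0 < 2 * (r\<^sup>2 * K + 1)" using l1 by (simp add: add_nonneg_pos)
        have "s < \<epsilon> / (2 * (r\<^sup>2 * K + 1))" using s unfolding s1_def by simp
        then have "s * (2 * (r\<^sup>2 * K + 1)) < \<epsilon>" using rk by (simp add: pos_less_divide_eq)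
        then have "s * (r\<^sup>2 * K + 1) \<le> \<epsilon> / 2" by (simp add: algebra_simps)
        then have "s * r\<^sup>2 * K \<le> \<epsilon> / 2" using s by (simp add: algebra_simps)
        then have "s * (s * r\<^sup>2 * K) \<le> s * (\<epsilon> / 2)" using s by (intro mult_left_mono) auto
        moreover have "s * (1 / r + r * v / 2) \<le> s * (q + \<epsilon> / 2)" using s r(2) by (intro mult_left_mono) auto
        ultimately show ?thesis by (simp add: mult.assoc)
      qed
      also have "\<dots> = m + q * s + \<epsilon> * s" by (simp add: algebra_simps)
      finally show ?thesis .
    qed
    then show ?thesis using s1 by blast
  qed
  have lower: "\<exists>s1>0. \<forall>s. 0 < s \<longrightarrow> s < s1 \<longrightarrow> m + q * s - \<epsilon> * s \<le> S_sup P f (s\<^sup>2)"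
    if e: "0 < \<epsilon>" for \<epsilon>
  proof (cases "v = 0")
    case True
    then have q: "q = 0" unfolding q_def by simp
    have "m + q * s - \<epsilon> * s \<le> S_sup P f (s\<^sup>2)" if "0 < s" for s
    proof -
      obtain Q where "Q \<in> KL_ball P (s\<^sup>2)" "integral\<^sup>L Q f = m" using ne[of "s\<^sup>2"] by auto
      then have "m \<le> S_sup P f (s\<^sup>2)" using Sge by metis
      moreover have "0 \<le> \<epsilon> * s" using e that by simp
      ultimately show ?thesis using q by simp
    qed
    then show ?thesis by (intro exI[of _ 1]) auto
  next
    case False
    then have "0 < v" using v0 by simp
    from ball_lower[OF P f m v this e] obtain s0 where s0: "0 < s0"
      "\<And>s. 0 < s \<Longrightarrow> s < s0 \<Longrightarrow> \<exists>Q\<in>KL_ball P (s\<^sup>2). m + s * (sqrt (2 * v) - \<epsilon>) \<le> integral\<^sup>L Q f"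
      by blast
    have "m + q * s - \<epsilon> * s \<le> S_sup P f (s\<^sup>2)" if ss: "0 < s" "s < s0" for s
    proof -
      obtain Q where Q: "Q \<in> KL_ball P (s\<^sup>2)" "m + s * (q - \<epsilon>) \<le> integral\<^sup>L Q f"
        using s0(2)[OF ss] unfolding q_def by blast
      then show ?thesis using Sge[OF Q(1)] by (simp add: algebra_simps)
    qed
    then show ?thesis using s0(1) by blast
  qed
  have main: "\<exists>b>0. \<forall>C. 0 < C \<longrightarrow> C < b \<longrightarrow> \<bar>S_sup P f C - m - q * sqrt C\<bar> \<le> \<epsilon> * sqrt C"
    if e: "0 < \<epsilon>" for \<epsilon>
  proof -
    obtain s1 where s1: "0 < s1" "\<And>s. 0 < s \<Longrightarrow> s < s1 \<Longrightarrow> S_sup P f (s\<^sup>2) \<le> m + q * s + \<epsilon> * s"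
      using upper[OF e] by blast
    obtain s2 where s2: "0 < s2" "\<And>s. 0 < s \<Longrightarrow> s < s2 \<Longrightarrow> m + q * s - \<epsilon> * s \<le> S_sup P f (s\<^sup>2)"
      using lower[OF e] by blast
    define b where "b = (min s1 s2)\<^sup>2"
    have b: "0 < b" unfolding b_def using s1 s2 by simp
    have "\<bar>S_sup P f C - m - q * sqrt C\<bar> \<le> \<epsilon> * sqrt C" if C: "0 < C" "C < b" for C
    proof -
      have "sqrt C < sqrt b" using C by simp
      also have "sqrt b = min s1 s2" unfolding b_def using s1 s2 by simp
      finally have sC: "sqrt C < s1" "sqrt C < s2" by auto
      have C2: "(sqrt C)\<^sup>2 = C" using C by simp
      have "0 < sqrt C" using C by simp
      then have "S_sup P f C \<le> m + q * sqrt C + \<epsilon> * sqrt C"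
        "m + q * sqrt C - \<epsilon> * sqrt C \<le> S_sup P f C"
        using s1(2)[of "sqrt C"] s2(2)[of "sqrt C"] sC C2 by auto
      then show ?thesis by (simp add: abs_le_iff)
    qed
    then show ?thesis using b by blast
  qed
  have ev: "eventually (\<lambda>C. \<bar>S_sup P f C - m - q * sqrt C\<bar> \<le> \<epsilon> * sqrt C) (at_right 0)"
    if "0 < \<epsilon>" for \<epsilon>
    using main[OF that] unfolding eventually_at_right_field by auto
  have pos: "eventually (\<lambda>C. 0 < C) (at_right (0::real))" by (simp add: eventually_at_right_less)
  have c1: "(\<lambda>C. S_sup P f C - m - sqrt (2 * v) * sqrt C) \<in> o[at_right 0](\<lambda>C. sqrt C)"
  proof (rule landau_o.smallI)
    fix c :: real assume c: "0 < c"
    show "eventually (\<lambda>C. norm (S_sup P f C - m - sqrt (2 * v) * sqrt C) \<le> c * norm (sqrt C)) (at_right 0)"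
      using eventually_conj[OF ev[OF c] pos] by eventually_elim (auto simp: q_def)
  qed
  have c2: "((\<lambda>C. (S_sup P f C - m) / (sqrt (2 * v) * sqrt C)) \<longlongrightarrow> 1) (at_right 0)" if vp: "v > 0"
  proof (rule tendstoI)
    fix e :: real assume e: "0 < e"
    have qp: "0 < q" unfolding q_def using vp by simp
    have eq: "0 < e * q / 2" using e qp by simp
    show "eventually (\<lambda>C. dist ((S_sup P f C - m) / (sqrt (2 * v) * sqrt C)) 1 < e) (at_right 0)"
      using eventually_conj[OF ev[OF eq] pos]
    proof eventually_elim
      case (elim C)
      then have sC: "0 < sqrt C" by simp
      have "(S_sup P f C - m) / (q * sqrt C) - 1 = (S_sup P f C - m - q * sqrt C) / (q * sqrt C)"
        using sC qp by (simp add: field_simps)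
      then have "\<bar>(S_sup P f C - m) / (q * sqrt C) - 1\<bar> = \<bar>S_sup P f C - m - q * sqrt C\<bar> / (q * sqrt C)"
        using sC qp by (simp add: abs_divide abs_mult)
      also have "\<dots> \<le> (e * q / 2 * sqrt C) / (q * sqrt C)"
        using elim sC qp by (intro divide_right_mono) auto
      also have "\<dots> = e / 2" using sC qp by (simp add: field_simps)
      finally show ?case using e unfolding q_def dist_real_def by simp
    qed
  qed
  have c3: "\<exists>Cs :: nat \<Rightarrow> real. (\<forall>j. Cs j > 0) \<and> decseq Cs \<and> Cs \<longlonglongrightarrow> 0 \<and>
           (\<forall>\<^sub>F j in sequentially. S_sup P f (Cs j) > m + k * sqrt (Cs j))"
    if vp: "v > 0" and k: "k < sqrt (2 * v)" for k
  proof -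
    define Cs where "Cs = (\<lambda>j::nat. inverse (real (Suc j)))"
    have Cs0: "\<forall>j. Cs j > 0" unfolding Cs_def by simp
    have Csd: "decseq Cs" unfolding Cs_def by (intro decseq_SucI) (simp add: field_simps)
    have Csl: "Cs \<longlonglongrightarrow> 0" unfolding Cs_def by (rule LIMSEQ_inverse_real_of_nat)
    have fl: "filterlim Cs (at_right 0) sequentially"
      by (rule tendsto_imp_filterlim_at_right[OF Csl]) (use Cs0 in auto)
    have eqk: "0 < (q - k) / 2" using k unfolding q_def by simp
    have "eventually (\<lambda>C. S_sup P f C > m + k * sqrt C) (at_right 0)"
      using eventually_conj[OF ev[OF eqk] pos]
    proof eventually_elim
      case (elim C)
      then have sC: "0 < sqrt C" by simp
      have "k * sqrt C < q * sqrt C - (q - k) / 2 * sqrt C"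
        using sC k unfolding q_def by (simp add: field_simps)
      moreover have "q * sqrt C - (q - k) / 2 * sqrt C \<le> S_sup P f C - m"
      proof -
        have "\<bar>S_sup P f C - m - q * sqrt C\<bar> \<le> (q - k) / 2 * sqrt C" using elim by simp
        then show ?thesis unfolding abs_le_iff by linarith
      qed
      ultimately show ?case by linarith
    qed
    from eventually_compose_filterlim[OF this fl]
    show ?thesis using Cs0 Csd Csl by blast
  qed
  show ?thesis using c1 c2 c3 by blast
qed

end
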